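(* Let $(a_n)_{n\ge1}$ be a complex sequence with $\sum_n|a_n|/\sqrt n<\infty$, and let $C\ge0$. Then $\langle T(a_n)f,T(a_n)g\rangle_{L^2}=C^2\langle f,g\rangle_{L^2}$ for all $f,g\in C_0(0,\infty)$ if and only if for every pair of coprime positive integers $(m_0,n_0)$, $$\sum_{k=1}^\infty\frac{a_{m_0k}\overline{a_{n_0k}}}{k}=\begin{cases}C^2,& m_0=n_0=1,\\ 0,& m_0\ne n_0.\end{cases}$$
   Context: $C_0(0,\infty)$ is the space of continuous compactly supported functions on $(0,\infty)$. For such $f$, $T(a_n)f(x)=\sum_{n=1}^\infty a_nf(nx)$ ($x>0$). The inner product is that of $L^2[0,\infty)$ with Lebesgue measure. *)

theory Defs
  imports "HOL-Analysis.Analysis"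
begin

text \<open>C_0(0,infinity): continuous complex functions on (0,infinity) with compact support
  in (0,infinity), represented as functions on the whole real line that are continuous
  and vanish outside some interval [c,d] with 0 < c.\<close>
definition C0_pos :: "(real \<Rightarrow> complex) set" where
  "C0_pos = {f. continuous_on UNIV f \<and>
      (\<exists>c d. 0 < c \<and> c \<le> d \<and> (\<forall>x. x \<notin> {c..d} \<longrightarrow> f x = 0))}"

definition T_op :: "(nat \<Rightarrow> complex) \<Rightarrow> (real \<Rightarrow> complex) \<Rightarrow> real \<Rightarrow> complex" where
  "T_op a f x = (if 0 < x then (\<Sum>n. a (Suc n) * f (real (Suc n) * x)) else 0)"

definition L2_inner :: "(real \<Rightarrow> complex) \<Rightarrow> (real \<Rightarrow> complex) \<Rightarrow> complex" where
  "L2_inner f g = (LINT x:{0..}|lborel. f x * cnj (g x))"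

end

theory Submission
  imports Defs "HOL-Analysis.Analysis"
begin


lemma C0_props:
  assumes "f \<in> C0_pos"
  obtains c d M where "0<c" "c\<le>d" "0\<le>M" "\<And>x. x\<notin>{c..d} \<Longrightarrow> f x = 0"
    "\<And>x. norm (f x) \<le> M" "continuous_on UNIV f"
proof -
  from assms obtain c d where cd: "0<c" "c\<le>d" "\<And>x. x\<notin>{c..d} \<Longrightarrow> f x = 0"
    and ct: "continuous_on UNIV f" unfolding C0_pos_def by blast
  have "compact (f ` {c..d})"
    by (rule compact_continuous_image[OF continuous_on_subset[OF ct]]) auto
  then obtain M where M: "M > 0" "\<And>y. y \<in> f ` {c..d} \<Longrightarrow> norm y \<le> M"
    using compact_imp_bounded bounded_pos by metis
  have "norm (f x) \<le> M" for x
    using M cd(3)[of x] by (cases "x \<in> {c..d}") auto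
  then show ?thesis using that[of c d M] cd ct M by auto
qed

lemma C0_meas:
  assumes "f \<in> C0_pos"
  shows "(\<lambda>x. f (r * x)) \<in> borel_measurable lborel"
proof -
  have "continuous_on UNIV f" using assms unfolding C0_pos_def by blast
  then have "continuous_on UNIV (\<lambda>x. f (r * x))"
    by (intro continuous_on_compose2[OF _ continuous_on_mult_left[OF continuous_on_id]]) auto
  then show ?thesis using borel_measurable_continuous_onI by simp
qed

lemma borel_measurable_cnj'[measurable]:
  fixes f :: "'a \<Rightarrow> complex"
  assumes "f \<in> borel_measurable M" shows "(\<lambda>x. cnj (f x)) \<in> borel_measurable M"
proof -
  have "(cnj :: complex \<Rightarrow> complex) \<in> borel_measurable borel"
    by (intro borel_measurable_continuous_onI continuous_intros)
  then show ?thesis using measurable_compose[OF assms] by blast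
qed

lemma int_ind: "a \<le> b \<Longrightarrow> (\<integral>x. K * indicator {a..b} x \<partial>lborel) = K * (b - a :: real)"
  by simp

lemma C0_zero_nonpos:
  assumes "f \<in> C0_pos" "x \<le> 0" shows "f x = 0"
  using assms unfolding C0_pos_def by force

lemma ind_bound:
  assumes "f \<in> C0_pos" "g \<in> C0_pos"
  shows "\<exists>K\<ge>0. \<forall>m n::nat. m > 0 \<longrightarrow> n > 0 \<longrightarrow>
     integrable lborel (\<lambda>x. f (real m * x) * cnj (g (real n * x))) \<and>
     (\<integral>x. norm (f (real m * x) * cnj (g (real n * x))) \<partial>lborel) \<le> K / sqrt (real m * real n)"
proof -
  obtain cf df Mf where f: "0<cf" "cf\<le>df" "0\<le>Mf" "\<And>x. x\<notin>{cf..df} \<Longrightarrow> f x = 0"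
    "\<And>x. norm (f x) \<le> Mf" using C0_props[OF assms(1)] by metis
  obtain cg dg Mg where g: "0<cg" "cg\<le>dg" "0\<le>Mg" "\<And>x. x\<notin>{cg..dg} \<Longrightarrow> g x = 0"
    "\<And>x. norm (g x) \<le> Mg" using C0_props[OF assms(2)] by metis
  define K where "K = Mf * Mg * sqrt (df * dg)"
  have K0: "K \<ge> 0" unfolding K_def using f g by simp
  {
    fix m n :: nat assume mn: "m > 0" "n > 0"
    let ?F = "\<lambda>x. f (real m * x) * cnj (g (real n * x))"
    have meas: "?F \<in> borel_measurable lborel"
    proof -
      have [measurable]: "(\<lambda>x. f (real m * x)) \<in> borel_measurable lborel"
        "(\<lambda>x. g (real n * x)) \<in> borel_measurable lborel"
        using C0_meas[OF assms(1)] C0_meas[OF assms(2)] by auto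
      show ?thesis by measurable
    qed
    have b1: "norm (?F x) \<le> Mf * Mg * indicator {cf / m .. df / m} x" for x
    proof (cases "x \<in> {cf / m .. df / m}")
      case True then show ?thesis using f(5)[of "m*x"] g(5)[of "n*x"] f g
        by (simp add: norm_mult mult_mono)
    next
      case False
      then have "real m * x \<notin> {cf..df}" using mn by (auto simp: field_simps)
      then show ?thesis using f(4) False by simp
    qed
    have b2: "norm (?F x) \<le> Mf * Mg * indicator {cg / n .. dg / n} x" for x
    proof (cases "x \<in> {cg / n .. dg / n}")
      case True then show ?thesis using f(5)[of "m*x"] g(5)[of "n*x"] f g
        by (simp add: norm_mult mult_mono)
    next
      case False
      then have "real n * x \<notin> {cg..dg}" using mn by (auto simp: field_simps)
      then show ?thesis using g(4) False by simp
    qed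
    have ii: "integrable lborel (\<lambda>x. Mf * Mg * indicator {a..b} x :: real)" for a b :: real
      by (intro integrable_mult_right integrable_real_indicator) (auto simp: emeasure_lborel_Icc_eq)
    have intF: "integrable lborel ?F"
      by (rule Bochner_Integration.integrable_bound[OF ii[of "cf/m" "df/m"] meas])
        (intro always_eventually allI order_trans[OF b1], simp)
    have "(\<integral>x. norm (?F x) \<partial>lborel) \<le> (\<integral>x. Mf * Mg * indicator {cf / m .. df / m} x \<partial>lborel)"
      by (intro integral_mono integrable_norm intF ii b1)
    also have "\<dots> = Mf * Mg * (df / m - cf / m)"
      using f mn by (intro int_ind divide_right_mono) auto
    also have "\<dots> \<le> Mf * Mg * (df / m)" using f g mn by (intro mult_left_mono) auto
    finally have i1: "(\<integral>x. norm (?F x) \<partial>lborel) \<le> Mf * Mg * (df / m)" .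
    have "(\<integral>x. norm (?F x) \<partial>lborel) \<le> (\<integral>x. Mf * Mg * indicator {cg / n .. dg / n} x \<partial>lborel)"
      by (intro integral_mono integrable_norm intF ii b2)
    also have "\<dots> = Mf * Mg * (dg / n - cg / n)"
      using g mn by (intro int_ind divide_right_mono) auto
    also have "\<dots> \<le> Mf * Mg * (dg / n)" using f g mn by (intro mult_left_mono) auto
    finally have i2: "(\<integral>x. norm (?F x) \<partial>lborel) \<le> Mf * Mg * (dg / n)" .
    define A where "A = (\<integral>x. norm (?F x) \<partial>lborel)"
    have A0: "A \<ge> 0" unfolding A_def by simp
    have "A * A \<le> (Mf * Mg * (df / m)) * (Mf * Mg * (dg / n))"
      using i1 i2 A0 unfolding A_def[symmetric] by (intro mult_mono) auto
    also have "\<dots> = (K / sqrt (real m * real n))^2"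
    proof -
      have e1: "(K / sqrt (real m * real n))^2 = K^2 / (real m * real n)"
        using mn by (simp add: power_divide)
      have e2: "K^2 = (Mf*Mg)^2 * (df*dg)" unfolding K_def using f g
        by (simp add: power_mult_distrib)
      show ?thesis unfolding e1 e2 by (simp add: power2_eq_square)
    qed
    finally have "A\<^sup>2 \<le> (K / sqrt (real m * real n))^2" by (simp add: power2_eq_square)
    then have "A \<le> K / sqrt (real m * real n)"
      by (rule power2_le_imp_le) (use K0 in simp)
    then have "integrable lborel ?F \<and> (\<integral>x. norm (?F x) \<partial>lborel) \<le> K / sqrt (real m * real n)"
      using intF A_def by simp
  }
  then show ?thesis using K0 by blast
qed


lemma C0_fin:
  assumes "f \<in> C0_pos"
  shows "finite {i::nat. f (real (Suc i) * x) \<noteq> 0}"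
proof (cases "x > 0")
  case False
  then have "{i::nat. f (real (Suc i) * x) \<noteq> 0} = {}"
    using C0_zero_nonpos[OF assms] by (auto simp: mult_nonneg_nonpos)
  then show ?thesis by simp
next
  case True
  obtain c d M where cd: "0<c" "c\<le>d" "\<And>x. x\<notin>{c..d} \<Longrightarrow> f x = 0"
    using C0_props[OF assms] by metis
  have "{i::nat. f (real (Suc i) * x) \<noteq> 0} \<subseteq> {..nat \<lceil>d / x\<rceil>}"
  proof
    fix i assume "i \<in> {i::nat. f (real (Suc i) * x) \<noteq> 0}"
    then have "real (Suc i) * x \<le> d" using cd(3) by force
    then have "real (Suc i) \<le> d / x" using True by (simp add: field_simps)
    then have "real i \<le> d / x" by simp
    then show "i \<in> {..nat \<lceil>d / x\<rceil>}" by (simp add: nat_le_iff le_ceiling_iff ceiling_le_iff) linarith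
  qed
  then show ?thesis using finite_subset by blast
qed

lemma T_op_sums:
  assumes "f \<in> C0_pos"
  shows "(\<lambda>i. a (Suc i) * f (real (Suc i) * x)) sums T_op a f x"
    and "summable (\<lambda>i. norm (a (Suc i) * f (real (Suc i) * x)))"
proof -
  have fin: "finite {i::nat. f (real (Suc i) * x) \<noteq> 0}" by (rule C0_fin[OF assms])
  have s: "summable (\<lambda>i. a (Suc i) * f (real (Suc i) * x))"
    by (rule summable_finite[OF fin]) auto
  show "summable (\<lambda>i. norm (a (Suc i) * f (real (Suc i) * x)))"
    by (rule summable_finite[OF fin]) auto
  show "(\<lambda>i. a (Suc i) * f (real (Suc i) * x)) sums T_op a f x"
  proof (cases "x > 0")
    case True
    then show ?thesis using s by (simp add: T_op_def summable_sums)
  next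
    case False
    then have "(\<lambda>i. a (Suc i) * f (real (Suc i) * x)) = (\<lambda>i. 0)"
      using C0_zero_nonpos[OF assms] by (auto simp: mult_nonneg_nonpos)
    then show ?thesis using False by (simp add: T_op_def)
  qed
qed

lemma L2_inner_lborel:
  assumes "\<And>x. x < 0 \<Longrightarrow> h x = 0"
  shows "L2_inner h k = (\<integral>x. h x * cnj (k x) \<partial>lborel)"
  unfolding L2_inner_def set_lebesgue_integral_def
  by (intro Bochner_Integration.integral_cong) (auto simp: assms indicator_def)


definition Ii :: "(real \<Rightarrow> complex) \<Rightarrow> (real \<Rightarrow> complex) \<Rightarrow> nat \<Rightarrow> nat \<Rightarrow> complex" where
  "Ii f g m n = (\<integral>x. f (real m * x) * cnj (g (real n * x)) \<partial>lborel)"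

lemma main_formula:
  fixes a :: "nat \<Rightarrow> complex"
  assumes fC: "f \<in> C0_pos" and gC: "g \<in> C0_pos"
    and sumb: "summable (\<lambda>n. norm (a (Suc n)) / sqrt (real (Suc n)))"
  shows "\<exists>K\<ge>0. (\<forall>i j. norm (a (Suc i) * cnj (a (Suc j)) * Ii f g (Suc i) (Suc j)) \<le>
            K * (norm (a (Suc i)) / sqrt (real (Suc i))) * (norm (a (Suc j)) / sqrt (real (Suc j))))
       \<and> L2_inner (T_op a f) (T_op a g) =
          (\<Sum>i. \<Sum>j. a (Suc i) * cnj (a (Suc j)) * Ii f g (Suc i) (Suc j))"
proof -
  obtain K where K0: "K \<ge> 0" and KB: "\<And>m n::nat. m > 0 \<Longrightarrow> n > 0 \<Longrightarrow>
     integrable lborel (\<lambda>x. f (real m * x) * cnj (g (real n * x))) \<and>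
     (\<integral>x. norm (f (real m * x) * cnj (g (real n * x))) \<partial>lborel) \<le> K / sqrt (real m * real n)"
    using ind_bound[OF fC gC] by blast
  define \<beta> where "\<beta> i = norm (a (Suc i)) / sqrt (real (Suc i))" for i
  have \<beta>0: "\<beta> i \<ge> 0" for i unfolding \<beta>_def by simp
  have sb: "summable \<beta>" using sumb unfolding \<beta>_def .
  define S where "S = suminf \<beta>"
  define u where "u i x = a (Suc i) * f (real (Suc i) * x)" for i x
  define v where "v j x = a (Suc j) * g (real (Suc j) * x)" for j x
  define w where "w i j x = u i x * cnj (v j x)" for i j x
  have w_eq: "w i j x = (a (Suc i) * cnj (a (Suc j))) * (f (real (Suc i) * x) * cnj (g (real (Suc j) * x)))"
    for i j x unfolding w_def u_def v_def by (simp add: mult_ac)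
  have int_w: "integrable lborel (w i j)" for i j
    unfolding w_eq using KB[of "Suc i" "Suc j"] by (intro integrable_mult_right) auto
  have intw_eq: "integral\<^sup>L lborel (w i j) = a (Suc i) * cnj (a (Suc j)) * Ii f g (Suc i) (Suc j)" for i j
    unfolding w_eq Ii_def by simp
  have norm_w: "(\<integral>x. norm (w i j x) \<partial>lborel) \<le> K * \<beta> i * \<beta> j" for i j
  proof -
    have "(\<integral>x. norm (w i j x) \<partial>lborel) = norm (a (Suc i)) * norm (a (Suc j)) *
        (\<integral>x. norm (f (real (Suc i) * x) * cnj (g (real (Suc j) * x))) \<partial>lborel)"
      unfolding w_eq by (simp add: norm_mult mult.assoc)
    also have "\<dots> \<le> norm (a (Suc i)) * norm (a (Suc j)) * (K / sqrt (real (Suc i) * real (Suc j)))"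
      using KB[of "Suc i" "Suc j"] by (intro mult_left_mono) auto
    also have "\<dots> = K * \<beta> i * \<beta> j" unfolding \<beta>_def by (simp add: real_sqrt_mult)
    finally show ?thesis .
  qed
  have bnd: "norm (a (Suc i) * cnj (a (Suc j)) * Ii f g (Suc i) (Suc j)) \<le> K * \<beta> i * \<beta> j" for i j
    using norm_w[of i j] integral_norm_bound[of lborel "w i j"] intw_eq[of i j] by simp
  have sum_row: "summable (\<lambda>j. K * \<beta> i * \<beta> j)" for i
    using sb by (intro summable_mult)
  have row_sum: "(\<Sum>j. K * \<beta> i * \<beta> j) = K * \<beta> i * S" for i
    unfolding S_def using sb by (simp add: suminf_mult)
  define U where "U i x = u i x * cnj (T_op a g x)" for i x
  have U_sums: "(\<lambda>j. w i j x) sums U i x" for i x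
  proof -
    have "(\<lambda>j. v j x) sums T_op a g x" unfolding v_def by (rule T_op_sums(1)[OF gC])
    then have "(\<lambda>j. cnj (v j x)) sums cnj (T_op a g x)" by (simp add: sums_cnj)
    then show ?thesis unfolding w_def U_def by (rule sums_mult)
  qed
  have w_norm_summable: "summable (\<lambda>j. norm (w i j x))" for i x
  proof -
    have "summable (\<lambda>j. norm (v j x))" unfolding v_def by (rule T_op_sums(2)[OF gC])
    then have "summable (\<lambda>j. norm (u i x) * norm (v j x))" by (rule summable_mult)
    then show ?thesis unfolding w_def by (simp add: norm_mult)
  qed
  have w_int_summable: "summable (\<lambda>j. \<integral>x. norm (w i j x) \<partial>lborel)" for i
    by (rule summable_comparison_test'[OF sum_row[of i], of 0]) (use norm_w in simp)
  have U_eq: "U i x = (\<Sum>j. w i j x)" for i x using U_sums sums_unique by metis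
  have int_U: "integrable lborel (U i)" for i
    unfolding U_eq by (rule integrable_suminf[OF int_w always_eventually]) (use w_norm_summable w_int_summable in auto)
  have intU_eq: "integral\<^sup>L lborel (U i) = (\<Sum>j. integral\<^sup>L lborel (w i j))" for i
    unfolding U_eq by (rule integral_suminf[OF int_w always_eventually]) (use w_norm_summable w_int_summable in auto)
  have normU: "(\<integral>x. norm (U i x) \<partial>lborel) \<le> K * \<beta> i * S" for i
  proof -
    have intn: "integrable lborel (\<lambda>x. norm (w i j x))" for j using int_w by simp
    have a1: "integrable lborel (\<lambda>x. \<Sum>j. norm (w i j x))"
      by (rule integrable_suminf[OF intn always_eventually]) (use w_norm_summable w_int_summable in auto)
    have a2: "(\<integral>x. (\<Sum>j. norm (w i j x)) \<partial>lborel) = (\<Sum>j. \<integral>x. norm (w i j x) \<partial>lborel)"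
      by (rule integral_suminf[OF intn always_eventually]) (use w_norm_summable w_int_summable in auto)
    have "(\<integral>x. norm (U i x) \<partial>lborel) \<le> (\<integral>x. (\<Sum>j. norm (w i j x)) \<partial>lborel)"
      by (rule integral_mono[OF integrable_norm[OF int_U] a1])
         (simp add: U_eq norm_suminf_le w_norm_summable)
    also have "\<dots> \<le> (\<Sum>j. K * \<beta> i * \<beta> j)"
      unfolding a2 by (rule suminf_le[OF norm_w w_int_summable sum_row])
    finally show ?thesis using row_sum by simp
  qed
  have TT_sums: "(\<lambda>i. U i x) sums (T_op a f x * cnj (T_op a g x))" for x
    unfolding U_def u_def by (rule sums_mult2[OF T_op_sums(1)[OF fC]])
  have U_norm_summable: "summable (\<lambda>i. norm (U i x))" for x
  proof -
    have "summable (\<lambda>i. norm (u i x))" unfolding u_def by (rule T_op_sums(2)[OF fC])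
    then have "summable (\<lambda>i. norm (u i x) * norm (cnj (T_op a g x)))" by (rule summable_mult2)
    then show ?thesis unfolding U_def by (simp add: norm_mult)
  qed
  have sum_col: "summable (\<lambda>i. K * \<beta> i * S)"
    using sb by (intro summable_mult2 summable_mult)
  have U_int_summable: "summable (\<lambda>i. \<integral>x. norm (U i x) \<partial>lborel)"
    by (rule summable_comparison_test'[OF sum_col, of 0]) (use normU in simp)
  have TT_eq: "T_op a f x * cnj (T_op a g x) = (\<Sum>i. U i x)" for x
    using TT_sums sums_unique by metis
  have "(\<integral>x. T_op a f x * cnj (T_op a g x) \<partial>lborel) = (\<Sum>i. integral\<^sup>L lborel (U i))"
    unfolding TT_eq by (rule integral_suminf[OF int_U always_eventually]) (use U_norm_summable U_int_summable in auto)
  also have "\<dots> = (\<Sum>i. \<Sum>j. a (Suc i) * cnj (a (Suc j)) * Ii f g (Suc i) (Suc j))"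
    unfolding intU_eq intw_eq ..
  finally have "L2_inner (T_op a f) (T_op a g) = (\<Sum>i. \<Sum>j. a (Suc i) * cnj (a (Suc j)) * Ii f g (Suc i) (Suc j))"
    by (subst L2_inner_lborel) (auto simp: T_op_def)
  then show ?thesis using K0 bnd unfolding \<beta>_def by blast
qed


lemma has_sum_diff':
  fixes f g :: "'a \<Rightarrow> 'b::topological_ab_group_add"
  assumes "(f has_sum a) A" "(g has_sum b) A"
  shows "((\<lambda>x. f x - g x) has_sum (a - b)) A"
proof -
  have "((\<lambda>x. - g x) has_sum (- b)) A" using assms(2) by (simp add: has_sum_uminus)
  from has_sum_add[OF assms(1) this] show ?thesis by simp
qed

lemma infsum_nat_suminf:
  fixes f :: "nat \<Rightarrow> complex"
  assumes "f summable_on UNIV"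
  shows "f sums infsum f UNIV"
proof -
  have "(\<lambda>n. norm (f n)) summable_on UNIV"
    using assms summable_on_iff_abs_summable_on_complex by blast
  then have sn: "summable (\<lambda>n. norm (f n))"
    by (subst (asm) summable_on_UNIV_nonneg_real_iff) auto
  then have "summable f" by (rule summable_norm_cancel)
  then have "(f has_sum suminf f) UNIV"
    by (intro norm_summable_imp_has_sum sn summable_sums)
  then have "infsum f UNIV = suminf f" by (rule infsumI)
  then show ?thesis using \<open>summable f\<close> summable_sums by fastforce
qed

lemma dsum_has_sum:
  fixes b :: "nat \<Rightarrow> nat \<Rightarrow> complex" and \<beta> :: "nat \<Rightarrow> real"
  assumes sb: "summable \<beta>" and \<beta>0: "\<And>i. \<beta> i \<ge> 0" and K0: "K \<ge> 0"
    and bnd: "\<And>i j. norm (b i j) \<le> K * \<beta> i * \<beta> j"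
  shows "((\<lambda>(i,j). b i j) has_sum (\<Sum>i. \<Sum>j. b i j)) UNIV"
proof -
  define S where "S = suminf \<beta>"
  have rows_nn: "((\<lambda>j. K * \<beta> i * \<beta> j) has_sum (K * \<beta> i * S)) UNIV" for i
  proof (rule norm_summable_imp_has_sum)
    show "summable (\<lambda>j. norm (K * \<beta> i * \<beta> j))"
      using sb K0 \<beta>0 by (simp add: abs_mult summable_mult)
    show "(\<lambda>j. K * \<beta> i * \<beta> j) sums (K * \<beta> i * S)"
      unfolding S_def using sb by (intro sums_mult summable_sums)
  qed
  have col: "(\<lambda>i. K * \<beta> i * S) summable_on UNIV"
    using sb K0 \<beta>0 S_def suminf_nonneg[OF sb] by (subst summable_on_UNIV_nonneg_real_iff)
      (auto intro!: summable_mult2 summable_mult)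
  have nn: "(\<lambda>(i,j). K * \<beta> i * \<beta> j) summable_on Sigma UNIV (\<lambda>_. UNIV)"
    by (rule summable_on_SigmaI[where g="\<lambda>i. K * \<beta> i * S"]) (use rows_nn col K0 \<beta>0 in auto)
  have "(\<lambda>x. norm ((\<lambda>(i,j). b i j) x)) summable_on Sigma UNIV (\<lambda>_. UNIV)"
    by (rule Infinite_Sum.abs_summable_on_comparison_test'[OF nn]) (auto simp: bnd)
  then have sm: "(\<lambda>(i,j). b i j) summable_on Sigma UNIV (\<lambda>_. UNIV)"
    using summable_on_iff_abs_summable_on_complex by blast
  define s where "s = infsum (\<lambda>(i,j). b i j) (Sigma UNIV (\<lambda>_. UNIV))"
  have hs: "((\<lambda>(i,j). b i j) has_sum s) (Sigma UNIV (\<lambda>_. UNIV))"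
    unfolding s_def using sm by (rule has_sum_infsum)
  have rows: "((\<lambda>j. b i j) has_sum (\<Sum>j. b i j)) UNIV" for i
  proof (rule norm_summable_imp_has_sum)
    show sn: "summable (\<lambda>j. norm (b i j))"
      by (rule summable_comparison_test'[where N=0, OF summable_mult[OF sb, of "K * \<beta> i"]]) (simp add: bnd)
    show "(\<lambda>j. b i j) sums (\<Sum>j. b i j)"
      using summable_norm_cancel[OF sn] by (rule summable_sums)
  qed
  have "((\<lambda>i. \<Sum>j. b i j) has_sum s) UNIV"
    by (rule has_sum_Sigma'[OF hs]) (use rows in simp)
  then have "(\<lambda>i. \<Sum>j. b i j) sums s" by (rule has_sum_imp_sums)
  then have "(\<Sum>i. \<Sum>j. b i j) = s" by (rule sums_unique[symmetric])
  then show ?thesis using hs by simp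
qed


lemma bij_Suc_pos: "bij_betw Suc (UNIV::nat set) {0<..}"
proof (rule bij_betw_imageI)
  show "inj_on Suc (UNIV::nat set)" by simp
  show "range Suc = {0::nat<..}" by (auto simp: image_iff gr0_conv_Suc)
qed

lemma pos_infsum_suminf:
  fixes h :: "nat \<Rightarrow> complex"
  assumes "h summable_on {0<..}"
  shows "infsum h {0<..} = (\<Sum>k. h (Suc k))"
proof -
  have e: "infsum (\<lambda>k. h (Suc k)) UNIV = infsum h {0<..}"
    by (rule infsum_reindex_bij_betw[OF bij_Suc_pos])
  have "(\<lambda>k. h (Suc k)) summable_on UNIV"
    using assms summable_on_reindex_bij_betw[OF bij_Suc_pos] by blast
  then have "(\<lambda>k. h (Suc k)) sums infsum h {0<..}" using infsum_nat_suminf e by metis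
  then show ?thesis by (simp add: sums_iff)
qed

lemma coprime_param_bij:
  "bij_betw (\<lambda>((p,q),d). (d*p, d*q)) (Sigma {(p,q). 0<p \<and> 0<q \<and> coprime p (q::nat)} (\<lambda>_. {0<..}))
      ({0<..} \<times> {0<..})"
proof (rule bij_betwI')
  fix x y :: "(nat \<times> nat) \<times> nat" assume x: "x \<in> Sigma {(p,q). 0<p \<and> 0<q \<and> coprime p (q::nat)} (\<lambda>_. {0<..})"
    and y: "y \<in> Sigma {(p,q). 0<p \<and> 0<q \<and> coprime p (q::nat)} (\<lambda>_. {0<..})"
  obtain p q d where xx: "x = ((p,q),d)" by (metis prod.collapse)
  obtain p' q' d' where yy: "y = ((p',q'),d')" by (metis prod.collapse)
  show "((\<lambda>((p,q),d). (d*p, d*q)) x = (\<lambda>((p,q),d). (d*p, d*q)) y) = (x = y)"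
  proof
    assume eq: "(\<lambda>((p,q),d). (d*p, d*q)) x = (\<lambda>((p,q),d). (d*p, d*q)) y"
    then have e1: "d*p = d'*p'" and e2: "d*q = d'*q'" using xx yy by auto
    have "gcd (d*p) (d*q) = d" using x xx by (simp add: gcd_mult_distrib_nat[symmetric])
    moreover have "gcd (d'*p') (d'*q') = d'" using y yy by (simp add: gcd_mult_distrib_nat[symmetric])
    ultimately have "d = d'" using e1 e2 by simp
    then show "x = y" using e1 e2 x xx yy by auto
  qed simp
next
  fix x :: "(nat \<times> nat) \<times> nat" assume x: "x \<in> Sigma {(p,q). 0<p \<and> 0<q \<and> coprime p (q::nat)} (\<lambda>_. {0<..})"
  then show "(\<lambda>((p,q),d). (d*p, d*q)) x \<in> {0<..} \<times> {0<..}" by auto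
next
  fix y :: "nat \<times> nat" assume y: "y \<in> ({0::nat<..} \<times> {0<..})"
  obtain m n where yy: "y = (m,n)" by (metis prod.collapse)
  have mn: "m > 0" "n > 0" using y yy by auto
  define d where "d = gcd m n"
  have d0: "d > 0" using mn d_def by simp
  have cop: "coprime (m div d) (n div d)" unfolding d_def using mn by (intro div_gcd_coprime) auto
  have m: "m = d * (m div d)" and n: "n = d * (n div d)" unfolding d_def by simp_all
  have "m div d > 0" using m mn by (metis gr0I mult_0_right)
  moreover have "n div d > 0" using n mn by (metis gr0I mult_0_right)
  ultimately show "\<exists>x\<in>Sigma {(p,q). 0<p \<and> 0<q \<and> coprime p (q::nat)} (\<lambda>_. {0<..}).
      y = (\<lambda>((p,q),d). (d*p, d*q)) x"
    using cop d0 m n yy by (intro bexI[of _ "((m div d, n div d), d)"]) auto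
qed

lemma regroup:
  fixes a :: "nat \<Rightarrow> complex" and J :: "nat \<Rightarrow> nat \<Rightarrow> complex"
  assumes hs: "((\<lambda>(m,n). a m * cnj (a n) * J m n) has_sum s) ({0<..} \<times> {0<..})"
    and scale: "\<And>d p q. 0<d \<Longrightarrow> 0<p \<Longrightarrow> 0<q \<Longrightarrow> J (d*p) (d*q) = J p q / of_nat d"
  shows "((\<lambda>(p,q). (\<Sum>k. a (p * Suc k) * cnj (a (q * Suc k)) / of_nat (Suc k)) * J p q) has_sum s)
           {(p,q). 0<p \<and> 0<q \<and> coprime p q}"
proof -
  define P where "P = {(p,q). 0<p \<and> 0<q \<and> coprime p (q::nat)}"
  define F where "F x d = a (d * fst x) * cnj (a (d * snd x)) * J (d * fst x) (d * snd x)" for x d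
  have hs2: "((\<lambda>(x,d). F x d) has_sum s) (Sigma P (\<lambda>_. {0<..}))"
  proof -
    have "((\<lambda>z. (\<lambda>(m,n). a m * cnj (a n) * J m n) ((\<lambda>((p,q),d). (d*p, d*q)) z)) has_sum s)
             (Sigma P (\<lambda>_. {0<..}))"
      using hs has_sum_reindex_bij_betw[OF coprime_param_bij] unfolding P_def by blast
    moreover have "(\<lambda>z. (\<lambda>(m,n). a m * cnj (a n) * J m n) ((\<lambda>((p,q),d). (d*p, d*q)) z)) = (\<lambda>(x,d). F x d)"
      by (auto simp: F_def fun_eq_iff)
    ultimately show ?thesis by simp
  qed
  have rowsum: "F x summable_on {0<..}" if "x \<in> P" for x
    using summable_on_SigmaD1[OF has_sum_imp_summable[OF hs2] that] .
  have "((\<lambda>x. infsum (F x) {0<..}) has_sum s) P"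
    by (rule has_sum_Sigma'[OF hs2[unfolded case_prod_beta']]) (use rowsum in \<open>auto simp: case_prod_beta'\<close>)
  moreover have "infsum (F x) {0<..} = (\<lambda>(p,q). (\<Sum>k. a (p * Suc k) * cnj (a (q * Suc k)) / of_nat (Suc k)) * J p q) x"
    if "x \<in> P" for x
  proof -
    obtain p q where x: "x = (p,q)" "0<p" "0<q" using \<open>x \<in> P\<close> unfolding P_def by auto
    define h where "h d = a (p * d) * cnj (a (q * d)) / of_nat d" for d
    have Fe: "F x d = J p q * h d" if "d \<in> {0<..}" for d
      using that x scale[of d p q] by (simp add: F_def h_def mult_ac)
    have "infsum (F x) {0<..} = infsum (\<lambda>d. J p q * h d) {0<..}"
      by (rule infsum_cong) (use Fe in auto)
    also have "\<dots> = J p q * infsum h {0<..}" by (rule infsum_cmult_right')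
    also have "\<dots> = J p q * (\<Sum>k. h (Suc k))"
    proof (cases "J p q = 0")
      case False
      have "(\<lambda>d. J p q * h d) summable_on {0<..}"
        using rowsum[OF \<open>x \<in> P\<close>] summable_on_cong[of "{0<..}" "F x" "\<lambda>d. J p q * h d"] Fe by auto
      then have "h summable_on {0<..}" using summable_on_cmult_right'[OF False] by blast
      then show ?thesis using pos_infsum_suminf by simp
    qed simp
    finally show ?thesis using x by (simp add: h_def mult.commute)
  qed
  ultimately show ?thesis unfolding P_def by (rule has_sum_cong[THEN iffD1, rotated]) (simp add: P_def)
qed


lemma Ii_scale:
  assumes "0 < d"
  shows "Ii f g (d*p) (d*q) = Ii f g p q / of_nat d"
proof -
  define F where "F y = f (real p * y) * cnj (g (real q * y))" for y
  have "Ii f g p q = \<bar>real d\<bar> *\<^sub>R (\<integral>x. F (0 + real d * x) \<partial>lborel)"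
    unfolding Ii_def F_def[symmetric] using assms by (intro lborel_integral_real_affine) auto
  also have "(\<integral>x. F (0 + real d * x) \<partial>lborel) = Ii f g (d*p) (d*q)"
    unfolding Ii_def F_def by (simp add: mult_ac)
  finally have "Ii f g p q = of_nat d * Ii f g (d*p) (d*q)" by (simp add: scaleR_conv_of_real)
  then show ?thesis using assms by (simp add: field_simps)
qed

lemma bij_Suc2: "bij_betw (\<lambda>(i,j). (Suc i, Suc j)) UNIV ({0::nat<..} \<times> {0::nat<..})"
proof (rule bij_betwI')
  fix y :: "nat \<times> nat" assume "y \<in> {0<..} \<times> {0<..}"
  then show "\<exists>x\<in>UNIV. y = (\<lambda>(i,j). (Suc i, Suc j)) x"
    by (intro bexI[of _ "(fst y - 1, snd y - 1)"]) (auto simp: prod_eq_iff)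
qed auto

lemma W_has_sum:
  fixes a :: "nat \<Rightarrow> complex"
  assumes fC: "f \<in> C0_pos" and gC: "g \<in> C0_pos"
    and sumb: "summable (\<lambda>n. norm (a (Suc n)) / sqrt (real (Suc n)))"
  shows "((\<lambda>(m,n). a m * cnj (a n) * Ii f g m n) has_sum L2_inner (T_op a f) (T_op a g)) ({0<..} \<times> {0<..})"
proof -
  obtain K where K0: "K \<ge> 0" and bnd: "\<And>i j. norm (a (Suc i) * cnj (a (Suc j)) * Ii f g (Suc i) (Suc j)) \<le>
            K * (norm (a (Suc i)) / sqrt (real (Suc i))) * (norm (a (Suc j)) / sqrt (real (Suc j)))"
    and eq: "L2_inner (T_op a f) (T_op a g) = (\<Sum>i. \<Sum>j. a (Suc i) * cnj (a (Suc j)) * Ii f g (Suc i) (Suc j))"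
    using main_formula[OF fC gC sumb] by blast
  have h0: "((\<lambda>(i,j). a (Suc i) * cnj (a (Suc j)) * Ii f g (Suc i) (Suc j)) has_sum L2_inner (T_op a f) (T_op a g)) UNIV"
    unfolding eq by (rule dsum_has_sum[OF sumb _ K0 bnd]) simp
  have eqf: "(\<lambda>(i,j). a (Suc i) * cnj (a (Suc j)) * Ii f g (Suc i) (Suc j)) =
     (\<lambda>x. (\<lambda>(m,n). a m * cnj (a n) * Ii f g m n) ((\<lambda>(i,j). (Suc i, Suc j)) x))"
    by (auto simp: fun_eq_iff)
  have h1: "((\<lambda>x. (\<lambda>(m,n). a m * cnj (a n) * Ii f g m n) ((\<lambda>(i,j). (Suc i, Suc j)) x)) has_sum
     L2_inner (T_op a f) (T_op a g)) UNIV"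
    using h0 unfolding eqf .
  from h1 show ?thesis by (simp only: has_sum_reindex_bij_betw[OF bij_Suc2])
qed

lemma P_has_sum:
  fixes a :: "nat \<Rightarrow> complex"
  assumes fC: "f \<in> C0_pos" and gC: "g \<in> C0_pos"
    and sumb: "summable (\<lambda>n. norm (a (Suc n)) / sqrt (real (Suc n)))"
  shows "((\<lambda>(p,q). (\<Sum>k. a (p * Suc k) * cnj (a (q * Suc k)) / of_nat (Suc k)) * Ii f g p q) has_sum
           L2_inner (T_op a f) (T_op a g)) {(p,q). 0<p \<and> 0<q \<and> coprime p q}"
  by (rule regroup[OF W_has_sum[OF fC gC sumb]]) (rule Ii_scale)

lemma L2_Ii: "f \<in> C0_pos \<Longrightarrow> L2_inner f g = Ii f g 1 1"
  unfolding Ii_def by (subst L2_inner_lborel) (auto intro: C0_zero_nonpos)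

lemma if_dir:
  fixes a :: "nat \<Rightarrow> complex"
  assumes fC: "f \<in> C0_pos" and gC: "g \<in> C0_pos"
    and sumb: "summable (\<lambda>n. norm (a (Suc n)) / sqrt (real (Suc n)))"
    and cond: "\<forall>m0 n0 :: nat. 0 < m0 \<longrightarrow> 0 < n0 \<longrightarrow> coprime m0 n0 \<longrightarrow>
            (\<Sum>k. a (m0 * Suc k) * cnj (a (n0 * Suc k)) / of_nat (Suc k)) =
              (if m0 = 1 \<and> n0 = 1 then complex_of_real (C ^ 2) else 0)"
  shows "L2_inner (T_op a f) (T_op a g) = complex_of_real (C ^ 2) * L2_inner f g"
proof -
  have hs: "((\<lambda>(p,q). (\<Sum>k. a (p * Suc k) * cnj (a (q * Suc k)) / of_nat (Suc k)) * Ii f g p q) has_sum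
           L2_inner (T_op a f) (T_op a g)) {(p,q). 0<p \<and> 0<q \<and> coprime p q}"
    by (rule P_has_sum[OF fC gC sumb])
  have hs2: "((\<lambda>(p,q). (\<Sum>k. a (p * Suc k) * cnj (a (q * Suc k)) / of_nat (Suc k)) * Ii f g p q) has_sum
           (complex_of_real (C ^ 2) * Ii f g 1 1)) {(p,q). 0<p \<and> 0<q \<and> coprime p q}"
  proof (rule has_sum_finite_neutralI[where B="{(1,1)}"])
    show "finite {(1::nat,1::nat)}" by simp
    show "{(1::nat,1::nat)} \<subseteq> {(p,q). 0<p \<and> 0<q \<and> coprime p q}" by simp
  next
    fix x assume x: "x \<in> {(p,q). 0<p \<and> 0<q \<and> coprime p q} - {(1::nat,1::nat)}"
    obtain p q where pq: "x = (p,q)" by (metis prod.collapse)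
    have h: "0 < p" "0 < q" "coprime p q" "\<not> (p = 1 \<and> q = 1)" using x pq by auto
    have "(\<Sum>k. a (p * Suc k) * cnj (a (q * Suc k)) / of_nat (Suc k)) =
        (if p = 1 \<and> q = 1 then complex_of_real (C ^ 2) else 0)"
      by (rule cond[rule_format, OF h(1) h(2) h(3)])
    also have "\<dots> = 0" by (rule if_not_P[OF h(4)])
    finally have "(\<Sum>k. a (p * Suc k) * cnj (a (q * Suc k)) / of_nat (Suc k)) = 0" .
    then show "(\<lambda>(p,q). (\<Sum>k. a (p * Suc k) * cnj (a (q * Suc k)) / of_nat (Suc k)) * Ii f g p q) x = 0"
      using pq by simp
  next
    have "(\<Sum>k. a (1 * Suc k) * cnj (a (1 * Suc k)) / of_nat (Suc k)) = complex_of_real (C ^ 2)"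
      using cond[rule_format, of 1 1] by simp
    then show "complex_of_real (C ^ 2) * Ii f g 1 1 = (\<Sum>x\<in>{(1,1)}.
       (\<lambda>(p,q). (\<Sum>k. a (p * Suc k) * cnj (a (q * Suc k)) / of_nat (Suc k)) * Ii f g p q) x)"
      by simp
  qed
  have "L2_inner (T_op a f) (T_op a g) = complex_of_real (C ^ 2) * Ii f g 1 1"
    using has_sum_unique[OF hs hs2] .
  then show ?thesis using L2_Ii[OF fC] by simp
qed


lemma tannery_has_sum:
  fixes t :: "real \<Rightarrow> 'a \<Rightarrow> complex" and l :: "'a \<Rightarrow> complex" and B :: "'a \<Rightarrow> real"
  assumes Bs: "B summable_on S" and d0: "\<delta>0 > 0"
    and bnd: "\<And>\<delta> x. 0 < \<delta> \<Longrightarrow> \<delta> < \<delta>0 \<Longrightarrow> x \<in> S \<Longrightarrow> norm (t \<delta> x) \<le> B x"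
    and lim: "\<And>x. x \<in> S \<Longrightarrow> \<exists>\<delta>1>0. \<forall>\<delta>. 0<\<delta> \<longrightarrow> \<delta><\<delta>1 \<longrightarrow> t \<delta> x = l x"
    and R: "\<And>\<delta>. 0 < \<delta> \<Longrightarrow> \<delta> < \<delta>0 \<Longrightarrow> (t \<delta> has_sum R) S"
  shows "(l has_sum R) S"
proof -
  obtain d1 where d1: "\<And>x. x \<in> S \<Longrightarrow> d1 x > 0 \<and> (\<forall>\<delta>. 0<\<delta> \<longrightarrow> \<delta><d1 x \<longrightarrow> t \<delta> x = l x)"
    using lim by metis
  have lB: "norm (l x) \<le> B x" if x: "x \<in> S" for x
  proof -
    define \<delta> where "\<delta> = min \<delta>0 (d1 x) / 2"
    have "0 < \<delta>" "\<delta> < \<delta>0" "\<delta> < d1 x" using d0 d1[OF x] unfolding \<delta>_def by auto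
    then show ?thesis using bnd[of \<delta> x] d1[OF x] x by auto
  qed
  have B0: "B x \<ge> 0" if "x \<in> S" for x using lB[OF that] norm_ge_zero order_trans by blast
  have "(\<lambda>x. norm (l x)) summable_on S"
    by (rule Infinite_Sum.abs_summable_on_comparison_test'[OF Bs lB])
  then have ls: "l summable_on S" using summable_on_iff_abs_summable_on_complex by blast
  define L where "L = infsum l S"
  have lL: "(l has_sum L) S" unfolding L_def using ls by (rule has_sum_infsum)
  have small: "norm (R - L) \<le> 2 * \<epsilon>" if eps: "\<epsilon> > 0" for \<epsilon>
  proof -
    obtain F where F: "finite F" "F \<subseteq> S" "dist (sum B F) (infsum B S) \<le> \<epsilon>"
      using infsum_finite_approximation[OF Bs eps] by blast
    have BF: "B summable_on F" using F(1) by (rule summable_on_finite)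
    have tail: "infsum B (S - F) = infsum B S - sum B F"
      using infsum_Diff[OF Bs BF F(2)] F(1) by simp
    have tail_le: "infsum B (S - F) \<le> \<epsilon>" using tail F(3) by (simp add: dist_real_def)
    define D where "D = Min (insert \<delta>0 (d1 ` F))"
    have D0: "D > 0" unfolding D_def using F d0 d1 by (subst Min_gr_iff) auto
    define \<delta> where "\<delta> = D / 2"
    have \<delta>: "0 < \<delta>" "\<delta> < \<delta>0" using D0 F(1) unfolding \<delta>_def D_def
      by (auto intro: le_less_trans[OF Min_le[of "insert \<delta>0 (d1 ` F)" \<delta>0]])
    have \<delta>F: "\<delta> < d1 x" if "x \<in> F" for x
    proof -
      have "D \<le> d1 x" unfolding D_def using F(1) that by (intro Min_le) auto
      then show ?thesis using D0 \<delta>_def by simp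
    qed
    have eqF: "t \<delta> x = l x" if "x \<in> F" for x using d1[of x] \<delta>F[OF that] \<delta>(1) F(2) that by blast
    have hd: "((\<lambda>x. t \<delta> x - l x) has_sum (R - L)) S"
    proof -
      have "((\<lambda>x. - l x) has_sum (- L)) S" using lL by (simp add: has_sum_uminus)
      from has_sum_add[OF R[OF \<delta>] this] show ?thesis by simp
    qed
    have hd2: "((\<lambda>x. t \<delta> x - l x) has_sum (R - L)) (S - F)"
      by (rule has_sum_cong_neutral[THEN iffD1, OF _ _ _ hd]) (use eqF F(2) in auto)
    have Bt: "B summable_on (S - F)" using summable_on_Diff[OF Bs BF F(2)] .
    have hB: "((\<lambda>x. 2 * B x) has_sum (2 * infsum B (S - F))) (S - F)"
      using has_sum_cmult_right[OF has_sum_infsum[OF Bt]] by simp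
    have "norm (R - L) \<le> 2 * infsum B (S - F)"
    proof (rule norm_infsum_le[OF hd2 hB])
      fix x assume x: "x \<in> S - F"
      have "norm (t \<delta> x - l x) \<le> norm (t \<delta> x) + norm (l x)" by (rule norm_triangle_ineq4)
      also have "\<dots> \<le> B x + B x" using bnd[OF \<delta>, of x] lB[of x] x by (intro add_mono) auto
      finally show "norm (t \<delta> x - l x) \<le> 2 * B x" by simp
    qed
    then show ?thesis using tail_le by linarith
  qed
  have "R = L"
  proof (rule ccontr)
    assume "R \<noteq> L"
    then have "norm (R - L) > 0" by simp
    then show False using small[of "norm (R - L) / 4"] by simp
  qed
  then show ?thesis using lL by simp
qed


definition hb :: "real \<Rightarrow> real \<Rightarrow> real" where "hb \<delta> y = max 0 (1 - \<bar>y - 1\<bar> / \<delta>)"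
definition bump :: "real \<Rightarrow> nat \<Rightarrow> real \<Rightarrow> complex" where
  "bump \<delta> p x = complex_of_real (hb \<delta> (x / real p))"
definition Gr :: "real \<Rightarrow> nat \<Rightarrow> nat \<Rightarrow> nat \<Rightarrow> nat \<Rightarrow> real" where
  "Gr \<delta> p q m n = (\<integral>x. hb \<delta> (real m * x / real p) * hb \<delta> (real n * x / real q) \<partial>lborel)"

lemma hb_nonneg: "hb \<delta> y \<ge> 0" unfolding hb_def by simp
lemma hb_le1: "\<delta> > 0 \<Longrightarrow> hb \<delta> y \<le> 1" unfolding hb_def by simp
lemma hb_zero: "\<delta> > 0 \<Longrightarrow> \<bar>y - 1\<bar> \<ge> \<delta> \<Longrightarrow> hb \<delta> y = 0" unfolding hb_def by simp
lemma hb_nz: "\<delta> > 0 \<Longrightarrow> hb \<delta> y \<noteq> 0 \<Longrightarrow> \<bar>y - 1\<bar> < \<delta>"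
  using hb_zero by force
lemma hb_half: "\<delta> > 0 \<Longrightarrow> \<bar>y - 1\<bar> \<le> \<delta> / 2 \<Longrightarrow> hb \<delta> y \<ge> 1/2"
  unfolding hb_def by (simp add: field_simps)
lemma hb_cont: "continuous_on UNIV (\<lambda>x. hb \<delta> (c * x))"
  unfolding hb_def divide_inverse by (intro continuous_intros)

lemma integrable_ind_bound:
  fixes F :: "real \<Rightarrow> real"
  assumes "continuous_on UNIV F" "\<And>x. \<bar>F x\<bar> \<le> M * indicator {a..b} x"
  shows "integrable lborel F"
proof -
  have ii: "integrable lborel (\<lambda>x. M * indicator {a..b} x :: real)"
    by (intro integrable_mult_right integrable_real_indicator) (auto simp: emeasure_lborel_Icc_eq)
  have m: "F \<in> borel_measurable lborel" using assms(1) borel_measurable_continuous_onI by simp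
  show ?thesis
    by (rule Bochner_Integration.integrable_bound[OF ii m])
      (intro always_eventually allI, simp only: real_norm_def, rule order_trans[OF assms(2) abs_ge_self])
qed

lemma hb_scaled_ind:
  assumes "\<delta> > 0" "m > 0" "p > 0"
  shows "hb \<delta> (real m * x / real p) \<le> indicator {real p * (1 - \<delta>) / m .. real p * (1 + \<delta>) / m} x"
proof (cases "x \<in> {real p * (1 - \<delta>) / m .. real p * (1 + \<delta>) / m}")
  case True then show ?thesis using hb_le1[OF assms(1)] by simp
next
  case False
  then have "\<bar>real m * x / real p - 1\<bar> \<ge> \<delta>" using assms
    by (auto simp: field_simps abs_if split: if_splits)
  then show ?thesis using hb_zero[OF assms(1)] False by simp
qed

lemma Gr_integrable:
  assumes "\<delta> > 0" "m > 0" "p > 0"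
  shows "integrable lborel (\<lambda>x. hb \<delta> (real m * x / real p) * hb \<delta> (real n * x / real q))"
proof (rule integrable_ind_bound[where M=1])
  have e: "(\<lambda>x. hb \<delta> (real m * x / real p)) = (\<lambda>x. hb \<delta> ((real m / real p) * x))"
    "(\<lambda>x. hb \<delta> (real n * x / real q)) = (\<lambda>x. hb \<delta> ((real n / real q) * x))" by auto
  show "continuous_on UNIV (\<lambda>x. hb \<delta> (real m * x / real p) * hb \<delta> (real n * x / real q))"
    by (intro continuous_on_mult hb_cont[of \<delta> "real m / real p", folded e(1)] hb_cont[of \<delta> "real n / real q", folded e(2)])
  fix x
  have "hb \<delta> (real m * x / real p) * hb \<delta> (real n * x / real q) \<le> hb \<delta> (real m * x / real p) * 1"
    by (intro mult_left_mono hb_le1 hb_nonneg assms)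
  also have "\<dots> \<le> 1 * indicator {real p * (1 - \<delta>) / m .. real p * (1 + \<delta>) / m} x"
    using hb_scaled_ind[OF assms] by simp
  finally show "\<bar>hb \<delta> (real m * x / real p) * hb \<delta> (real n * x / real q)\<bar> \<le>
      1 * indicator {real p * (1 - \<delta>) / m .. real p * (1 + \<delta>) / m} x"
    by (simp add: hb_nonneg)
qed


lemma Gr_bound:
  assumes d: "\<delta> > 0" and mn: "m > 0" "n > 0" "p > 0" "q > 0"
  shows "\<bar>Gr \<delta> p q m n\<bar> \<le> 2 * \<delta> * sqrt (real p * real q) / sqrt (real m * real n)"
proof -
  let ?F = "\<lambda>x. hb \<delta> (real m * x / real p) * hb \<delta> (real n * x / real q)"
  have iF: "integrable lborel ?F" using Gr_integrable[OF d mn(1) mn(3)] .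
  have ii: "integrable lborel (\<lambda>x. 1 * indicator {a..b} x :: real)" for a b :: real
    by (intro integrable_mult_right integrable_real_indicator) (auto simp: emeasure_lborel_Icc_eq)
  have G0: "Gr \<delta> p q m n \<ge> 0" unfolding Gr_def
    by (rule Bochner_Integration.integral_nonneg) (simp add: hb_nonneg)
  have "Gr \<delta> p q m n \<le> (\<integral>x. 1 * indicator {real p * (1 - \<delta>) / m .. real p * (1 + \<delta>) / m} x \<partial>lborel)"
    unfolding Gr_def
  proof (rule integral_mono[OF iF ii])
    fix x
    have "?F x \<le> hb \<delta> (real m * x / real p) * 1" by (intro mult_left_mono hb_le1 hb_nonneg d)
    also have "\<dots> \<le> 1 * indicator {real p * (1 - \<delta>) / m .. real p * (1 + \<delta>) / m} x"
      using hb_scaled_ind[OF d mn(1) mn(3)] by simp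
    finally show "?F x \<le> 1 * indicator {real p * (1 - \<delta>) / m .. real p * (1 + \<delta>) / m} x" .
  qed
  also have "\<dots> = 1 * (real p * (1 + \<delta>) / m - real p * (1 - \<delta>) / m)"
    using d mn by (intro int_ind divide_right_mono mult_left_mono) auto
  also have "\<dots> = 2 * \<delta> * p / m" by (simp add: diff_divide_distrib[symmetric] algebra_simps)
  finally have g1: "Gr \<delta> p q m n \<le> 2 * \<delta> * p / m" .
  have "Gr \<delta> p q m n \<le> (\<integral>x. 1 * indicator {real q * (1 - \<delta>) / n .. real q * (1 + \<delta>) / n} x \<partial>lborel)"
    unfolding Gr_def
  proof (rule integral_mono[OF iF ii])
    fix x
    have "?F x \<le> 1 * hb \<delta> (real n * x / real q)" by (intro mult_right_mono hb_le1 hb_nonneg d)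
    also have "\<dots> \<le> 1 * indicator {real q * (1 - \<delta>) / n .. real q * (1 + \<delta>) / n} x"
      using hb_scaled_ind[OF d mn(2) mn(4)] by simp
    finally show "?F x \<le> 1 * indicator {real q * (1 - \<delta>) / n .. real q * (1 + \<delta>) / n} x" .
  qed
  also have "\<dots> = 1 * (real q * (1 + \<delta>) / n - real q * (1 - \<delta>) / n)"
    using d mn by (intro int_ind divide_right_mono mult_left_mono) auto
  also have "\<dots> = 2 * \<delta> * q / n" by (simp add: diff_divide_distrib[symmetric] algebra_simps)
  finally have g2: "Gr \<delta> p q m n \<le> 2 * \<delta> * q / n" .
  have "(Gr \<delta> p q m n)\<^sup>2 \<le> (2 * \<delta> * p / m) * (2 * \<delta> * q / n)"
    unfolding power2_eq_square using g1 g2 G0 by (intro mult_mono) auto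
  also have "\<dots> = (2 * \<delta> * sqrt (real p * real q) / sqrt (real m * real n))\<^sup>2"
    using mn by (simp add: power_divide power_mult_distrib power2_eq_square)
  finally have "Gr \<delta> p q m n \<le> 2 * \<delta> * sqrt (real p * real q) / sqrt (real m * real n)"
    by (rule power2_le_imp_le) (use d in simp)
  then show ?thesis using G0 by simp
qed

lemma Gr_ray:
  assumes d: "\<delta> > 0" and mn: "m > 0" "n > 0" "p > 0" "q > 0" and eq: "m * q = n * p"
  shows "Gr \<delta> p q m n = Gr \<delta> 1 1 1 1 * real p / real m"
proof -
  define t where "t = real m / real p"
  have t0: "t > 0" using mn t_def by simp
  have nq: "real n / real q = t"
  proof -
    have "real m * real q = real n * real p" using eq by (metis of_nat_mult)
    then show ?thesis unfolding t_def using mn by (simp add: field_simps)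
  qed
  define F where "F y = hb \<delta> y * hb \<delta> y" for y
  have "Gr \<delta> 1 1 1 1 = (\<integral>x. F x \<partial>lborel)" unfolding Gr_def F_def by simp
  also have "\<dots> = \<bar>t\<bar> *\<^sub>R (\<integral>x. F (0 + t * x) \<partial>lborel)"
    using t0 by (intro lborel_integral_real_affine) simp
  also have "(\<integral>x. F (0 + t * x) \<partial>lborel) = Gr \<delta> p q m n"
  proof -
    have "F (0 + t * x) = hb \<delta> (real m * x / real p) * hb \<delta> (real n * x / real q)" for x
    proof -
      have "real m * x / real p = t * x" unfolding t_def by simp
      moreover have "real n * x / real q = t * x" using nq by (metis times_divide_eq_left mult.commute)
      ultimately show ?thesis unfolding F_def by simp
    qed
    then show ?thesis unfolding Gr_def by simp
  qed
  finally have "Gr \<delta> 1 1 1 1 = t * Gr \<delta> p q m n" using t0 by simp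
  then show ?thesis unfolding t_def using mn by (simp add: field_simps)
qed

lemma Gr_off:
  assumes mn: "m > 0" "n > 0" "p > 0" "q > 0" and neq: "m * q \<noteq> n * p"
  shows "\<exists>\<delta>1>0. \<forall>\<delta>. 0 < \<delta> \<longrightarrow> \<delta> < \<delta>1 \<longrightarrow> Gr \<delta> p q m n = 0"
proof -
  define A where "A = real m * real q"
  define B where "B = real n * real p"
  have A0: "A > 0" and B0: "B > 0" using mn A_def B_def by auto
  have AB: "A \<noteq> B" using neq unfolding A_def B_def by (metis of_nat_eq_iff of_nat_mult)
  define \<delta>1 where "\<delta>1 = \<bar>B - A\<bar> / (A + B)"
  have d1: "\<delta>1 > 0" unfolding \<delta>1_def using A0 B0 AB by simp
  have "Gr \<delta> p q m n = 0" if d: "0 < \<delta>" "\<delta> < \<delta>1" for \<delta>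
  proof -
    have z: "hb \<delta> (real m * x / real p) * hb \<delta> (real n * x / real q) = 0" for x
    proof (rule ccontr)
      define s where "s = real m * x / real p"
      define t where "t = real n * x / real q"
      assume "hb \<delta> (real m * x / real p) * hb \<delta> (real n * x / real q) \<noteq> 0"
      then have hs: "\<bar>s - 1\<bar> < \<delta>" and ht: "\<bar>t - 1\<bar> < \<delta>"
        using hb_nz[OF d(1)] unfolding s_def t_def by auto
      have sB: "s * B = t * A" unfolding s_def t_def A_def B_def using mn by (simp add: field_simps)
      have "B - A = (t - 1) * A - (s - 1) * B" using sB by (simp add: algebra_simps)
      then have "\<bar>B - A\<bar> = \<bar>(t - 1) * A - (s - 1) * B\<bar>" by simp
      also have "\<dots> \<le> \<bar>(t - 1) * A\<bar> + \<bar>(s - 1) * B\<bar>" by (rule abs_triangle_ineq4)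
      also have "\<dots> = \<bar>t - 1\<bar> * A + \<bar>s - 1\<bar> * B" using A0 B0 by (simp add: abs_mult)
      also have "\<dots> < \<delta> * A + \<delta> * B"
        using hs ht A0 B0 by (intro add_strict_mono mult_strict_right_mono) auto
      also have "\<dots> < \<delta>1 * (A + B)" using d A0 B0 by (simp add: distrib_left[symmetric])
      also have "\<dots> = \<bar>B - A\<bar>" unfolding \<delta>1_def using A0 B0 by simp
      finally show False by simp
    qed
    show ?thesis unfolding Gr_def z by simp
  qed
  then show ?thesis using d1 by blast
qed

lemma Gr_J_lower:
  assumes d: "\<delta> > 0"
  shows "Gr \<delta> 1 1 1 1 \<ge> \<delta> / 4"
proof -
  have ii: "integrable lborel (\<lambda>x. (1/4) * indicator {1 - \<delta>/2 .. 1 + \<delta>/2} x :: real)"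
    by (intro integrable_mult_right integrable_real_indicator) (auto simp: emeasure_lborel_Icc_eq)
  have "(\<integral>x. (1/4) * indicator {1 - \<delta>/2 .. 1 + \<delta>/2} x \<partial>lborel) = (1/4) * ((1 + \<delta>/2) - (1 - \<delta>/2))"
    using d by (intro int_ind) auto
  also have "\<dots> = \<delta> / 4" by simp
  finally have e: "(\<integral>x. (1/4) * indicator {1 - \<delta>/2 .. 1 + \<delta>/2} x \<partial>lborel) = \<delta> / 4" .
  have "(\<integral>x. (1/4) * indicator {1 - \<delta>/2 .. 1 + \<delta>/2} x \<partial>lborel) \<le> Gr \<delta> 1 1 1 1"
    unfolding Gr_def
  proof (rule integral_mono[OF ii Gr_integrable[OF d]])
    fix x :: real
    show "(1/4) * indicator {1 - \<delta>/2 .. 1 + \<delta>/2} x \<le> hb \<delta> (real 1 * x / real 1) * hb \<delta> (real 1 * x / real 1)"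
    proof (cases "x \<in> {1 - \<delta>/2 .. 1 + \<delta>/2}")
      case True
      then have "hb \<delta> x \<ge> 1/2" using hb_half[OF d, of x] by (auto simp: abs_if)
      then have "(1/2) * (1/2) \<le> hb \<delta> x * hb \<delta> x" by (intro mult_mono) auto
      then show ?thesis using True by simp
    next
      case False then show ?thesis by (simp add: hb_nonneg)
    qed
  qed auto
  then show ?thesis using e by simp
qed

lemma Ii_bump: "Ii (bump \<delta> p) (bump \<delta> q) m n = complex_of_real (Gr \<delta> p q m n)"
  unfolding Ii_def Gr_def bump_def by (simp flip: of_real_mult)

lemma bump_C0:
  assumes d: "0 < \<delta>" "\<delta> < 1" and p: "p > 0"
  shows "bump \<delta> p \<in> C0_pos"
  unfolding C0_pos_def
proof (intro CollectI conjI exI)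
  have e: "bump \<delta> p = (\<lambda>x. complex_of_real (hb \<delta> ((1 / real p) * x)))"
    unfolding bump_def by auto
  show "continuous_on UNIV (bump \<delta> p)" unfolding e
    by (intro continuous_on_of_real hb_cont)
  show "0 < real p * (1 - \<delta>)" using d p by simp
  show "real p * (1 - \<delta>) \<le> real p * (1 + \<delta>)" using d p by simp
  show "\<forall>x. x \<notin> {real p * (1 - \<delta>)..real p * (1 + \<delta>)} \<longrightarrow> bump \<delta> p x = 0"
  proof (intro allI impI)
    fix x assume "x \<notin> {real p * (1 - \<delta>)..real p * (1 + \<delta>)}"
    then have "\<bar>x / real p - 1\<bar> \<ge> \<delta>" using p d by (auto simp: field_simps abs_if)
    then show "bump \<delta> p x = 0" unfolding bump_def using hb_zero[OF d(1)] by simp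
  qed
qed


lemma prod_summable:
  fixes \<beta> :: "nat \<Rightarrow> real"
  assumes sb: "summable \<beta>" and \<beta>0: "\<And>i. \<beta> i \<ge> 0"
  shows "(\<lambda>(i,j). \<beta> i * \<beta> j) summable_on UNIV"
proof -
  define S where "S = suminf \<beta>"
  have rows: "((\<lambda>j. \<beta> i * \<beta> j) has_sum (\<beta> i * S)) UNIV" for i
  proof (rule norm_summable_imp_has_sum)
    show "summable (\<lambda>j. norm (\<beta> i * \<beta> j))"
      using sb \<beta>0 by (simp add: abs_mult summable_mult)
    show "(\<lambda>j. \<beta> i * \<beta> j) sums (\<beta> i * S)"
      unfolding S_def using sb by (intro sums_mult summable_sums)
  qed
  have col: "(\<lambda>i. \<beta> i * S) summable_on UNIV"
    using sb \<beta>0 S_def suminf_nonneg[OF sb] by (subst summable_on_UNIV_nonneg_real_iff)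
      (auto intro!: summable_mult2)
  have "(\<lambda>(i,j). \<beta> i * \<beta> j) summable_on Sigma UNIV (\<lambda>_. UNIV)"
    by (rule summable_on_SigmaI[where g="\<lambda>i. \<beta> i * S"]) (use rows col \<beta>0 in auto)
  then show ?thesis by simp
qed

lemma ray_param:
  assumes "0 < m" "0 < n" "0 < p" "0 < (q::nat)" "coprime p q" "m * q = n * p"
  shows "\<exists>k. m = p * Suc k \<and> n = q * Suc k"
proof -
  have "p dvd m * q" using assms(6) by simp
  then have "p dvd m" using assms(5) by (simp add: coprime_dvd_mult_left_iff)
  then obtain j where j: "m = p * j" by blast
  have "j > 0" using j assms(1) by (cases j) auto
  then obtain k where k: "j = Suc k" using gr0_conv_Suc by blast
  have "p * (j * q) = p * n" using assms(6) j by (simp add: mult_ac)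
  then have "n = q * j" using assms(3) by (simp add: mult.commute)
  then show ?thesis using j k by blast
qed

lemma only_if_dir:
  fixes a :: "nat \<Rightarrow> complex" and C :: real
  assumes sumb: "summable (\<lambda>n. norm (a (Suc n)) / sqrt (real (Suc n)))"
    and hyp: "\<forall>f\<in>C0_pos. \<forall>g\<in>C0_pos.
            L2_inner (T_op a f) (T_op a g) = complex_of_real (C ^ 2) * L2_inner f g"
    and pq: "0 < p" "0 < q" "coprime p q"
  shows "(\<Sum>k. a (p * Suc k) * cnj (a (q * Suc k)) / of_nat (Suc k)) =
              (if p = 1 \<and> q = 1 then complex_of_real (C ^ 2) else 0)"
proof -
  define R where "R = (if p = 1 \<and> q = 1 then complex_of_real (C ^ 2) else 0)"
  define S where "S = ({0::nat<..} \<times> {0::nat<..})"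
  define J where "J \<delta> = Gr \<delta> 1 1 1 1" for \<delta>
  define t where "t \<delta> x = (case x of (m,n) \<Rightarrow> a m * cnj (a n) * Ii (bump \<delta> p) (bump \<delta> q) m n)
       * inverse (complex_of_real (J \<delta>))" for \<delta> x
  define l where "l x = (case x of (m,n) \<Rightarrow> if m * q = n * p then a m * cnj (a n) * (of_nat p / of_nat m) else 0)" for x
  define B where "B x = (case x of (m,n) \<Rightarrow> 8 * sqrt (real p * real q) *
      ((norm (a m) / sqrt (real m)) * (norm (a n) / sqrt (real n))))" for x
  have J0: "J \<delta> > 0" if "\<delta> > 0" for \<delta>
    using Gr_J_lower[OF that] that unfolding J_def by linarith
  obtain \<delta>0 where d0: "\<delta>0 > 0" "\<delta>0 \<le> 1/2"
    and dR: "\<And>\<delta>. 0 < \<delta> \<Longrightarrow> \<delta> < \<delta>0 \<Longrightarrow>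
       complex_of_real (C ^ 2) * complex_of_real (Gr \<delta> p q 1 1) * inverse (complex_of_real (J \<delta>)) = R"
  proof (cases "p = 1 \<and> q = 1")
    case True
    show ?thesis
    proof (rule that[of "1/2"])
      fix \<delta> :: real assume "0 < \<delta>"
      then show "complex_of_real (C ^ 2) * complex_of_real (Gr \<delta> p q 1 1) * inverse (complex_of_real (J \<delta>)) = R"
        using True J0[of \<delta>] unfolding R_def J_def by (simp add: field_simps)
    qed auto
  next
    case False
    then have "p \<noteq> q" using pq by auto
    then have "1 * q \<noteq> 1 * p" by simp
    then obtain \<delta>2 where d2: "\<delta>2 > 0" "\<And>\<delta>. 0 < \<delta> \<Longrightarrow> \<delta> < \<delta>2 \<Longrightarrow> Gr \<delta> p q 1 1 = 0"
      using Gr_off[of 1 1 p q] pq by auto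
    show ?thesis
    proof (rule that[of "min (1/2) \<delta>2"])
      fix \<delta> :: real assume "0 < \<delta>" "\<delta> < min (1/2) \<delta>2"
      then show "complex_of_real (C ^ 2) * complex_of_real (Gr \<delta> p q 1 1) * inverse (complex_of_real (J \<delta>)) = R"
      proof -
        have "Gr \<delta> p q 1 1 = 0" using d2(2) \<open>0 < \<delta>\<close> \<open>\<delta> < min (1/2) \<delta>2\<close> by simp
        then show ?thesis unfolding R_def if_not_P[OF False] by simp
      qed
    qed (use d2 in auto)
  qed
  have tR: "(t \<delta> has_sum R) S" if d: "0 < \<delta>" "\<delta> < \<delta>0" for \<delta>
  proof -
    have fC: "bump \<delta> p \<in> C0_pos" and gC: "bump \<delta> q \<in> C0_pos"
      using bump_C0 d d0 pq by auto
    have hs: "((\<lambda>(m,n). a m * cnj (a n) * Ii (bump \<delta> p) (bump \<delta> q) m n) has_sum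
        L2_inner (T_op a (bump \<delta> p)) (T_op a (bump \<delta> q))) S"
      unfolding S_def by (rule W_has_sum[OF fC gC sumb])
    have L: "L2_inner (T_op a (bump \<delta> p)) (T_op a (bump \<delta> q)) =
        complex_of_real (C ^ 2) * complex_of_real (Gr \<delta> p q 1 1)"
      using hyp fC gC L2_Ii[OF fC] Ii_bump by metis
    have "((\<lambda>x. (\<lambda>(m,n). a m * cnj (a n) * Ii (bump \<delta> p) (bump \<delta> q) m n) x * inverse (complex_of_real (J \<delta>)))
        has_sum (L2_inner (T_op a (bump \<delta> p)) (T_op a (bump \<delta> q)) * inverse (complex_of_real (J \<delta>)))) S"
      by (rule has_sum_cmult_left[OF hs])
    then show ?thesis unfolding L dR[OF d] t_def[abs_def] by simp
  qed
  have bnd: "norm (t \<delta> x) \<le> B x" if d: "0 < \<delta>" "\<delta> < \<delta>0" and x: "x \<in> S" for \<delta> x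
  proof -
    obtain m n where x': "x = (m,n)" "m > 0" "n > 0" using x unfolding S_def by auto
    have Jl: "J \<delta> \<ge> \<delta> / 4" unfolding J_def by (rule Gr_J_lower[OF d(1)])
    have "norm (t \<delta> x) = norm (a m) * norm (a n) * (\<bar>Gr \<delta> p q m n\<bar> / J \<delta>)"
      unfolding t_def x' Ii_bump using J0[OF d(1)]
      by (simp add: norm_mult norm_inverse divide_inverse)
    also have "\<dots> \<le> norm (a m) * norm (a n) * ((2 * \<delta> * sqrt (real p * real q) / sqrt (real m * real n)) / (\<delta> / 4))"
    proof (intro mult_left_mono frac_le)
      show "\<bar>Gr \<delta> p q m n\<bar> \<le> 2 * \<delta> * sqrt (real p * real q) / sqrt (real m * real n)"
        using Gr_bound[OF d(1) x'(2) x'(3) pq(1) pq(2)] .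
    qed (use Jl d in auto)
    also have "\<dots> = B x" unfolding B_def x' using d(1) x'
      by (simp add: real_sqrt_mult field_simps)
    finally show ?thesis .
  qed
  have lim: "\<exists>\<delta>1>0. \<forall>\<delta>. 0<\<delta> \<longrightarrow> \<delta><\<delta>1 \<longrightarrow> t \<delta> x = l x" if x: "x \<in> S" for x
  proof -
    obtain m n where x': "x = (m,n)" "m > 0" "n > 0" using x unfolding S_def by auto
    show ?thesis
    proof (cases "m * q = n * p")
      case True
      have "t \<delta> x = l x" if "0 < \<delta>" for \<delta>
      proof -
        have "Gr \<delta> p q m n = J \<delta> * real p / real m"
          unfolding J_def by (rule Gr_ray[OF that x'(2) x'(3) pq(1) pq(2) True])
        then have G: "complex_of_real (Gr \<delta> p q m n) = complex_of_real (J \<delta>) * of_nat p / of_nat m"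
          by simp
        have "J \<delta> \<noteq> 0" using J0[OF that] by simp
        have "t \<delta> (m,n) = a m * cnj (a n) * complex_of_real (Gr \<delta> p q m n) *
            inverse (complex_of_real (J \<delta>))"
          unfolding t_def Ii_bump by simp
        also have "\<dots> = a m * cnj (a n) * (complex_of_real (J \<delta>) * of_nat p / of_nat m) *
            inverse (complex_of_real (J \<delta>))"
          by (simp only: G)
        also have "\<dots> = a m * cnj (a n) * (of_nat p / of_nat m)"
          using \<open>J \<delta> \<noteq> 0\<close> by (simp add: field_simps)
        finally show ?thesis unfolding l_def x' using True by simp
      qed
      then show ?thesis by (intro exI[of _ 1]) auto
    next
      case False
      obtain \<delta>1 where "\<delta>1 > 0" "\<And>\<delta>. 0 < \<delta> \<Longrightarrow> \<delta> < \<delta>1 \<Longrightarrow> Gr \<delta> p q m n = 0"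
        using Gr_off[OF x'(2) x'(3) pq(1) pq(2) False] by auto
      then show ?thesis unfolding t_def l_def x' Ii_bump using False by auto
    qed
  qed
  have Bs: "B summable_on S"
  proof -
    define \<beta> where "\<beta> i = norm (a (Suc i)) / sqrt (real (Suc i))" for i
    have "(\<lambda>(i,j). \<beta> i * \<beta> j) summable_on UNIV"
      by (rule prod_summable) (use sumb in \<open>auto simp: \<beta>_def\<close>)
    then have "(\<lambda>x. 8 * sqrt (real p * real q) * (\<lambda>(i,j). \<beta> i * \<beta> j) x) summable_on UNIV"
      by (rule summable_on_cmult_right)
    moreover have "(\<lambda>x. 8 * sqrt (real p * real q) * (\<lambda>(i,j). \<beta> i * \<beta> j) x) = (\<lambda>x. B ((\<lambda>(i,j). (Suc i, Suc j)) x))"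
      by (auto simp: fun_eq_iff B_def \<beta>_def)
    ultimately have "(\<lambda>x. B ((\<lambda>(i,j). (Suc i, Suc j)) x)) summable_on UNIV" by simp
    then show ?thesis unfolding S_def using summable_on_reindex_bij_betw[OF bij_Suc2] by blast
  qed
  have lR: "(l has_sum R) S"
    by (rule tannery_has_sum[OF Bs d0(1) bnd lim tR])
  define \<phi> where "\<phi> k = (p * Suc k, q * Suc k)" for k
  have ray_sub: "range \<phi> \<subseteq> S" unfolding \<phi>_def S_def using pq by auto
  have lray: "(l has_sum R) (range \<phi>)"
  proof (rule has_sum_cong_neutral[THEN iffD1, OF _ _ _ lR])
    fix x assume "x \<in> S - range \<phi>"
    then obtain m n where x': "x = (m,n)" "m > 0" "n > 0" "(m,n) \<notin> range \<phi>" unfolding S_def by auto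
    have "m * q \<noteq> n * p"
    proof
      assume "m * q = n * p"
      then obtain k where "m = p * Suc k" "n = q * Suc k" using ray_param[OF x'(2) x'(3) pq] by blast
      then show False using x'(4) unfolding \<phi>_def by auto
    qed
    then show "l x = 0" unfolding l_def x' by simp
  qed (use ray_sub in auto)
  have inj: "inj \<phi>" unfolding \<phi>_def inj_def using pq by auto
  have "((l \<circ> \<phi>) has_sum R) UNIV" using lray has_sum_reindex[OF inj] by blast
  moreover have "(l \<circ> \<phi>) = (\<lambda>k. a (p * Suc k) * cnj (a (q * Suc k)) / of_nat (Suc k))"
  proof
    fix k
    have e: "(of_nat p / of_nat (p * Suc k) :: complex) = 1 / of_nat (Suc k)"
      using pq(1) by (simp only: of_nat_mult) (simp add: field_simps del: of_nat_Suc)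
    show "(l \<circ> \<phi>) k = a (p * Suc k) * cnj (a (q * Suc k)) / of_nat (Suc k)"
    proof -
      have c: "(p * Suc k) * q = (q * Suc k) * p" by (simp only: mult_ac)
      have "(l \<circ> \<phi>) k = a (p * Suc k) * cnj (a (q * Suc k)) * (of_nat p / of_nat (p * Suc k))"
        unfolding \<phi>_def l_def comp_def prod.case if_P[OF c] ..
      also have "\<dots> = a (p * Suc k) * cnj (a (q * Suc k)) / of_nat (Suc k)"
        unfolding e by simp
      finally show ?thesis .
    qed
  qed
  ultimately have "(\<lambda>k. a (p * Suc k) * cnj (a (q * Suc k)) / of_nat (Suc k)) sums R"
    by (metis has_sum_imp_sums)
  then show ?thesis unfolding R_def by (simp add: sums_iff)
qed


theorem proposition4:
  fixes a :: "nat \<Rightarrow> complex" and C :: real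
  assumes "summable (\<lambda>n. norm (a (Suc n)) / sqrt (real (Suc n)))"
    and "C \<ge> 0"
  shows "(\<forall>f\<in>C0_pos. \<forall>g\<in>C0_pos.
            L2_inner (T_op a f) (T_op a g) = complex_of_real (C ^ 2) * L2_inner f g)
     \<longleftrightarrow>
         (\<forall>m0 n0 :: nat. 0 < m0 \<longrightarrow> 0 < n0 \<longrightarrow> coprime m0 n0 \<longrightarrow>
            (\<Sum>k. a (m0 * Suc k) * cnj (a (n0 * Suc k)) / of_nat (Suc k)) =
              (if m0 = 1 \<and> n0 = 1 then complex_of_real (C ^ 2) else 0))"
proof
  assume h: "\<forall>f\<in>C0_pos. \<forall>g\<in>C0_pos.
            L2_inner (T_op a f) (T_op a g) = complex_of_real (C ^ 2) * L2_inner f g"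
  show "\<forall>m0 n0 :: nat. 0 < m0 \<longrightarrow> 0 < n0 \<longrightarrow> coprime m0 n0 \<longrightarrow>
            (\<Sum>k. a (m0 * Suc k) * cnj (a (n0 * Suc k)) / of_nat (Suc k)) =
              (if m0 = 1 \<and> n0 = 1 then complex_of_real (C ^ 2) else 0)"
    using only_if_dir[OF assms(1) h] by blast
next
  assume c: "\<forall>m0 n0 :: nat. 0 < m0 \<longrightarrow> 0 < n0 \<longrightarrow> coprime m0 n0 \<longrightarrow>
            (\<Sum>k. a (m0 * Suc k) * cnj (a (n0 * Suc k)) / of_nat (Suc k)) =
              (if m0 = 1 \<and> n0 = 1 then complex_of_real (C ^ 2) else 0)"
  show "\<forall>f\<in>C0_pos. \<forall>g\<in>C0_pos.
            L2_inner (T_op a f) (T_op a g) = complex_of_real (C ^ 2) * L2_inner f g"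
    using if_dir[OF _ _ assms(1) c] by blast
qed

end
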